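(* The image $\mu_{\mathfrak a}(V)$ is a polyhedral, and the set $\{x\in V:\mu_{\mathfrak a}(\overline{A\cdot x})=\mu_{\mathfrak a}(V)\}$ is an open dense subset of $V$.
   Context: Let $V$ be a finite-dimensional real vector space with a scalar product $\langle\cdot,\cdot\rangle$. Let $G\subset\mathrm{GL}(V)$ be a connected closed subgroup, closed under transpose, with Lie algebra $\mathfrak g$, $G=K\exp(\mathfrak p)$ with $K=G\cap\mathrm O(V)$, $\mathfrak p=\mathfrak g\cap\mathrm{Sym}(V)$. Let $\mathfrak a\subset\mathfrak p$ be an Abelian subalgebra, $A=\exp(\mathfrak a)$, and $\mu_{\mathfrak a}:V\to\mathfrak a^*$, $\mu_{\mathfrak a}(x)(\xi)=\langle\xi x,x\rangle$. A polyhedral is an intersection of finitely many closed linear half-spaces. *)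

theory Defs
  imports "HOL-Analysis.Analysis"
begin

text \<open>V is modelled as real^'n with the standard scalar product; endomorphisms of V
  are matrices real^'n^'n, the transpose being the adjoint.\<close>

primrec mat_pow :: "real^'n^'n \<Rightarrow> nat \<Rightarrow> real^'n^'n" where
  "mat_pow M 0 = mat 1"
| "mat_pow M (Suc k) = M ** mat_pow M k"

definition mexp :: "real^'n^'n \<Rightarrow> real^'n^'n" where
  "mexp M = (\<Sum>k. (1 / fact k) *\<^sub>R mat_pow M k)"

text \<open>The dual space of a subspace a of matrices: linear functionals on a
  (normalised to vanish outside a).\<close>
definition dual_space :: "(real^'n^'n) set \<Rightarrow> (real^'n^'n \<Rightarrow> real) set" where
  "dual_space a = {f. (\<forall>\<xi>\<in>a. \<forall>\<eta>\<in>a. f (\<xi> + \<eta>) = f \<xi> + f \<eta>)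
                    \<and> (\<forall>\<xi>\<in>a. \<forall>c. f (c *\<^sub>R \<xi>) = c * f \<xi>)
                    \<and> (\<forall>\<xi>. \<xi> \<notin> a \<longrightarrow> f \<xi> = 0)}"

definition moment_map :: "(real^'n^'n) set \<Rightarrow> real^'n \<Rightarrow> (real^'n^'n \<Rightarrow> real)" where
  "moment_map a x = (\<lambda>\<xi>. if \<xi> \<in> a then (\<xi> *v x) \<bullet> x else 0)"

definition orbit_A :: "(real^'n^'n) set \<Rightarrow> real^'n \<Rightarrow> (real^'n) set" where
  "orbit_A a x = {mexp \<xi> *v x | \<xi>. \<xi> \<in> a}"

text \<open>Every linear functional on the finite-dimensional a* is evaluation at some xi in a,
  so a closed linear half-space of a* is {f. f xi <= 0} for some xi in a.\<close>
definition polyhedral_dual :: "(real^'n^'n) set \<Rightarrow> (real^'n^'n \<Rightarrow> real) set \<Rightarrow> bool" where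
  "polyhedral_dual a S \<longleftrightarrow>
     (\<exists>F. finite F \<and> F \<subseteq> a \<and> S = {f \<in> dual_space a. \<forall>\<xi>\<in>F. f \<xi> \<le> 0})"

end

theory Submission
  imports Defs "HOL-Analysis.Analysis"
begin

lemma sym_mv:
  fixes M :: "real^'n^'n"
  assumes "transpose M = M"
  shows "(M *v u) \<bullet> v = u \<bullet> (M *v v)"
proof -
  have "(M *v u) \<bullet> v = (u v* M) \<bullet> v"
    by (metis assms transpose_matrix_vector)
  also have "\<dots> = u \<bullet> (M *v v)" by (rule dot_lmul_matrix)
  finally show ?thesis .
qed

lemma quad_nonneg_zero:
  fixes \<alpha> \<beta> :: real
  assumes "\<beta> \<ge> 0" "\<And>t. 2 * t * \<alpha> + t * t * \<beta> \<ge> 0"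
  shows "\<alpha> = 0"
proof (rule ccontr)
  assume "\<alpha> \<noteq> 0"
  define t where "t = - \<alpha> / (\<beta> + 1)"
  have b1: "\<beta> + 1 > 0" using assms(1) by linarith
  have tb: "t * (\<beta> + 1) = - \<alpha>" using b1 by (simp add: t_def)
  have "(\<beta>+1)^2 * (2 * t * \<alpha> + t * t * \<beta>) = 2 * (t * (\<beta>+1)) * \<alpha> * (\<beta>+1) + (t * (\<beta>+1))^2 * \<beta>"
    by (simp add: algebra_simps power2_eq_square)
  also have "\<dots> = - (\<alpha>^2 * (\<beta> + 2))" unfolding tb by (simp add: algebra_simps power2_eq_square)
  also have "\<dots> < 0" using \<open>\<alpha> \<noteq> 0\<close> assms(1) by (simp add: add_nonneg_pos)
  finally have "(\<beta>+1)^2 * (2 * t * \<alpha> + t * t * \<beta>) < 0" .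
  moreover have "(\<beta>+1)^2 * (2 * t * \<alpha> + t * t * \<beta>) \<ge> 0" using assms(2)[of t] by simp
  ultimately show False by linarith
qed

lemma sym_eigvec:
  fixes M :: "real^'n^'n"
  assumes sym: "transpose M = M" and S: "subspace S" and inv: "\<And>u. u \<in> S \<Longrightarrow> M *v u \<in> S"
    and ne: "S \<noteq> {0}"
  shows "\<exists>v c. v \<in> S \<and> v \<noteq> 0 \<and> M *v v = c *\<^sub>R v"
proof -
  define K where "K = S \<inter> sphere 0 1"
  have "compact K" unfolding K_def
    by (simp add: S closed_subspace compact_Int_closed compact_sphere inf_commute closed_Int_compact)
  obtain w where w: "w \<in> S" "w \<noteq> 0" using ne S subspace_0 by blast
  have "(1 / norm w) *\<^sub>R w \<in> K" unfolding K_def using w S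
    by (simp add: subspace_scale)
  hence "K \<noteq> {}" by blast
  have "continuous_on K (\<lambda>u. u \<bullet> (M *v u))"
    by (intro continuous_intros linear_continuous_on bounded_linear_inner_left
        linear_linear[THEN iffD1] matrix_vector_mul_linear) 
  then obtain v where vK: "v \<in> K" and vmax: "\<And>u. u \<in> K \<Longrightarrow> u \<bullet> (M *v u) \<le> v \<bullet> (M *v v)"
    using continuous_attains_sup[OF \<open>compact K\<close> \<open>K \<noteq> {}\<close>] by blast
  define c where "c = v \<bullet> (M *v v)"
  have vS: "v \<in> S" and nv: "norm v = 1" using vK by (auto simp: K_def)
  have vv: "v \<bullet> v = 1" using nv by (simp add: norm_eq_1)
  have le: "u \<bullet> (M *v u) \<le> c * (u \<bullet> u)" if "u \<in> S" for u
  proof (cases "u = 0")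
    case True then show ?thesis by simp
  next
    case False
    define u' where "u' = (1 / norm u) *\<^sub>R u"
    have "u' \<in> K" unfolding K_def u'_def using that False S by (simp add: subspace_scale)
    hence "u' \<bullet> (M *v u') \<le> c" using vmax c_def by blast
    moreover have "u \<bullet> (M *v u) = (norm u)^2 * (u' \<bullet> (M *v u'))"
      using False by (simp add: u'_def matrix_vector_mult_scaleR field_simps power2_eq_square)
    moreover have "(norm u)^2 * (u' \<bullet> (M *v u')) \<le> (norm u)^2 * c"
      using \<open>u' \<bullet> (M *v u') \<le> c\<close> by (rule mult_left_mono) simp
    ultimately have "u \<bullet> (M *v u) \<le> c * (norm u)^2" by (simp only: mult.commute)
    then show ?thesis by (simp only: power2_norm_eq_inner)
  qed
  define w where "w = c *\<^sub>R v - M *v v"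
  have wS: "w \<in> S" unfolding w_def using vS inv S by (simp add: subspace_diff subspace_scale)
  define \<phi> where "\<phi> u = c * (u \<bullet> u) - u \<bullet> (M *v u)" for u
  have phinn: "\<phi> u \<ge> 0" if "u \<in> S" for u using le[OF that] by (simp add: \<phi>_def)
  have symw: "v \<bullet> (M *v w) = w \<bullet> (M *v v)" using sym_mv[OF sym, of w v] by (simp add: inner_commute)
  have exp: "\<phi> (v + t *\<^sub>R w) = 2 * t * (w \<bullet> w) + t * t * \<phi> w" for t
  proof -
    have "\<phi> (v + t *\<^sub>R w) = \<phi> v + 2 * t * (c * (v \<bullet> w) - w \<bullet> (M *v v)) + t * t * \<phi> w"
      unfolding \<phi>_def using symw
      by (simp add: matrix_vector_right_distrib matrix_vector_mult_scaleR inner_add_left inner_add_right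
          algebra_simps inner_commute[of w v])
    moreover have "\<phi> v = 0" using vv by (simp add: \<phi>_def c_def)
    moreover have "c * (v \<bullet> w) - w \<bullet> (M *v v) = w \<bullet> w"
    proof -
      have "w \<bullet> w = w \<bullet> (c *\<^sub>R v - M *v v)" by (subst (2) w_def) (rule refl)
      also have "\<dots> = c * (w \<bullet> v) - w \<bullet> (M *v v)" by (simp add: inner_diff_right)
      finally show ?thesis by (simp add: inner_commute[of v w])
    qed
    ultimately show ?thesis by simp
  qed
  have "w \<bullet> w = 0"
  proof (rule quad_nonneg_zero)
    show "\<phi> w \<ge> 0" using phinn wS .
    fix t
    show "2 * t * (w \<bullet> w) + t * t * \<phi> w \<ge> 0"
      using phinn[of "v + t *\<^sub>R w"] exp[of t] vS wS S by (simp add: subspace_add subspace_scale)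
  qed
  hence "M *v v = c *\<^sub>R v" by (simp add: w_def)
  moreover have "v \<noteq> 0" using nv by auto
  ultimately show ?thesis using vS by blast
qed

lemma simdiag_sub:
  fixes a :: "(real^'n^'n) set"
  assumes sym: "\<forall>\<xi>\<in>a. transpose \<xi> = \<xi>" and comm: "\<forall>\<xi>\<in>a. \<forall>\<eta>\<in>a. \<xi> ** \<eta> = \<eta> ** \<xi>"
  shows "subspace S \<Longrightarrow> (\<forall>\<xi>\<in>a. \<forall>u\<in>S. \<xi> *v u \<in> S) \<Longrightarrow>
    \<exists>B. B \<subseteq> S \<and> pairwise orthogonal B \<and> (\<forall>b\<in>B. norm b = 1) \<and> span B = S \<and>
        (\<forall>b\<in>B. \<forall>\<xi>\<in>a. \<exists>c. \<xi> *v b = c *\<^sub>R b)"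
proof (induction "dim S" arbitrary: S rule: less_induct)
  case less
  note S = less.prems(1) and inv = less.prems(2)
  show ?case
  proof (cases "\<forall>\<xi>\<in>a. \<exists>c. \<forall>u\<in>S. \<xi> *v u = c *\<^sub>R u")
    case True
    obtain B where B: "B \<subseteq> S" "pairwise orthogonal B" "\<And>x. x \<in> B \<Longrightarrow> norm x = 1" "span B = S"
      using orthonormal_basis_subspace[OF S] by metis
    show ?thesis
      apply (rule exI[of _ B]) using B True by blast
  next
    case False
    then obtain \<xi>0 where x0: "\<xi>0 \<in> a" and nsc: "\<And>c. \<exists>u\<in>S. \<xi>0 *v u \<noteq> c *\<^sub>R u" by blast
    have "S \<noteq> {0}" using nsc[of 0] by auto
    obtain v c where v: "v \<in> S" "v \<noteq> 0" "\<xi>0 *v v = c *\<^sub>R v"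
      using sym_eigvec[of \<xi>0 S] sym x0 S inv \<open>S \<noteq> {0}\<close> by blast
    define E where "E = {u\<in>S. \<xi>0 *v u = c *\<^sub>R u}"
    define F where "F = {u\<in>S. \<forall>e\<in>E. e \<bullet> u = 0}"
    have subE: "subspace E" unfolding E_def subspace_def using S
      by (auto simp: subspace_add subspace_scale subspace_0 matrix_vector_right_distrib
          matrix_vector_mult_scaleR scaleR_add_right)
    have subF: "subspace F" unfolding F_def subspace_def using S
      by (auto simp: subspace_add subspace_scale subspace_0 inner_add_right)
    have invE: "\<forall>\<xi>\<in>a. \<forall>u\<in>E. \<xi> *v u \<in> E"
    proof (intro ballI)
      fix \<xi> u assume "\<xi> \<in> a" "u \<in> E"
      have "\<xi>0 *v (\<xi> *v u) = \<xi> *v (\<xi>0 *v u)"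
        using comm \<open>\<xi> \<in> a\<close> x0 by (simp add: matrix_vector_mul_assoc)
      also have "\<dots> = c *\<^sub>R (\<xi> *v u)" using \<open>u \<in> E\<close> by (simp add: E_def matrix_vector_mult_scaleR)
      finally show "\<xi> *v u \<in> E" using inv \<open>\<xi> \<in> a\<close> \<open>u \<in> E\<close> by (auto simp: E_def)
    qed
    have invF: "\<forall>\<xi>\<in>a. \<forall>u\<in>F. \<xi> *v u \<in> F"
    proof (intro ballI)
      fix \<xi> u assume "\<xi> \<in> a" "u \<in> F"
      have "e \<bullet> (\<xi> *v u) = 0" if "e \<in> E" for e
      proof -
        have "e \<bullet> (\<xi> *v u) = (\<xi> *v e) \<bullet> u" using sym_mv[of \<xi> e u] sym \<open>\<xi> \<in> a\<close> by simp
        also have "\<dots> = 0" using invE \<open>\<xi> \<in> a\<close> that \<open>u \<in> F\<close> by (auto simp: F_def)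
        finally show ?thesis .
      qed
      then show "\<xi> *v u \<in> F" using inv \<open>\<xi> \<in> a\<close> \<open>u \<in> F\<close> by (auto simp: F_def)
    qed
    have "E \<subseteq> S" "F \<subseteq> S" by (auto simp: E_def F_def)
    have "E \<noteq> S"
    proof
      assume "E = S"
      then have "\<forall>u\<in>S. \<xi>0 *v u = c *\<^sub>R u" by (auto simp: E_def)
      then show False using nsc[of c] by blast
    qed
    have "v \<in> E" using v by (simp add: E_def)
    have "v \<notin> F" using \<open>v \<in> E\<close> v(2) unfolding F_def by (auto intro!: bexI[of _ v])
    have spE: "span E = E" "span S = S" "span F = F" using subE S subF by (simp_all add: span_eq_iff)
    have dE: "dim E < dim S"
      using dim_psubset[of E S] \<open>E \<subseteq> S\<close> \<open>E \<noteq> S\<close> unfolding spE by blast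
    have "F \<noteq> S" using \<open>v \<notin> F\<close> v(1) by blast
    have dF: "dim F < dim S"
      using dim_psubset[of F S] \<open>F \<subseteq> S\<close> \<open>F \<noteq> S\<close> unfolding spE by blast
    obtain BE where BE: "BE \<subseteq> E" "pairwise orthogonal BE" "\<forall>b\<in>BE. norm b = 1" "span BE = E"
        "\<forall>b\<in>BE. \<forall>\<xi>\<in>a. \<exists>c. \<xi> *v b = c *\<^sub>R b"
      using less.hyps[OF dE subE invE] by blast
    obtain BF where BF: "BF \<subseteq> F" "pairwise orthogonal BF" "\<forall>b\<in>BF. norm b = 1" "span BF = F"
        "\<forall>b\<in>BF. \<forall>\<xi>\<in>a. \<exists>c. \<xi> *v b = c *\<^sub>R b"
      using less.hyps[OF dF subF invF] by blast
    have po: "pairwise orthogonal (BE \<union> BF)"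
      unfolding pairwise_def
    proof (intro ballI impI)
      fix x y assume xy: "x \<in> BE \<union> BF" "y \<in> BE \<union> BF" "x \<noteq> y"
      show "orthogonal x y"
      proof (cases "x \<in> BE")
        case True
        then show ?thesis
        proof (cases "y \<in> BE")
          case True then show ?thesis using \<open>x \<in> BE\<close> xy BE(2) by (auto simp: pairwise_def)
        next
          case False then have "y \<in> F" using xy BF(1) by auto
          then show ?thesis using \<open>x \<in> BE\<close> BE(1) by (auto simp: F_def orthogonal_def)
        qed
      next
        case False
        then have "x \<in> F" using xy BF(1) by auto
        show ?thesis
        proof (cases "y \<in> BE")
          case True then show ?thesis using \<open>x \<in> F\<close> BE(1) by (auto simp: F_def orthogonal_def inner_commute)
        next
          case False then show ?thesis using \<open>x \<notin> BE\<close> xy BF(2) by (auto simp: pairwise_def)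
        qed
      qed
    qed
    have "span (BE \<union> BF) = S"
    proof
      show "span (BE \<union> BF) \<subseteq> S"
        using BE(1) BF(1) \<open>E \<subseteq> S\<close> \<open>F \<subseteq> S\<close> S by (intro span_minimal) auto
      show "S \<subseteq> span (BE \<union> BF)"
      proof
        fix u assume "u \<in> S"
        obtain y z where yz: "y \<in> span E" "\<And>w. w \<in> span E \<Longrightarrow> orthogonal z w" "u = y + z"
          using orthogonal_subspace_decomp_exists by metis
        have "y \<in> E" using yz(1) spE(1) by simp
        have "z \<in> S" using \<open>u \<in> S\<close> \<open>y \<in> E\<close> \<open>E \<subseteq> S\<close> S yz(3)
          by (metis add_diff_cancel_left' subsetD subspace_diff)
        have "z \<in> F" using \<open>z \<in> S\<close> yz(2) spE(1)
          by (auto simp: F_def orthogonal_def inner_commute)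
        have "y \<in> span (BE \<union> BF)" using \<open>y \<in> E\<close> BE(4) span_mono[of BE "BE \<union> BF"] by auto
        moreover have "z \<in> span (BE \<union> BF)" using \<open>z \<in> F\<close> BF(4) span_mono[of BF "BE \<union> BF"] by auto
        ultimately show "u \<in> span (BE \<union> BF)" using yz(3) by (simp add: span_add)
      qed
    qed
    then show ?thesis
      apply (intro exI[of _ "BE \<union> BF"])
      using BE BF po \<open>E \<subseteq> S\<close> \<open>F \<subseteq> S\<close> by blast
  qed
qed

lemma simdiag:
  fixes a :: "(real^'n^'n) set"
  assumes sym: "\<forall>\<xi>\<in>a. transpose \<xi> = \<xi>" and comm: "\<forall>\<xi>\<in>a. \<forall>\<eta>\<in>a. \<xi> ** \<eta> = \<eta> ** \<xi>"
  shows "\<exists>B. finite B \<and> pairwise orthogonal B \<and> (\<forall>b\<in>B. norm b = 1) \<and> span B = UNIV \<and>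
        (\<forall>b\<in>B. \<forall>\<xi>\<in>a. \<xi> *v b = (b \<bullet> (\<xi> *v b)) *\<^sub>R b)"
proof -
  obtain B where B: "pairwise orthogonal B" "\<forall>b\<in>B. norm b = 1" "span B = UNIV"
        "\<forall>b\<in>B. \<forall>\<xi>\<in>a. \<exists>c. \<xi> *v b = c *\<^sub>R b"
    using simdiag_sub[OF sym comm, of UNIV] by auto
  have "finite B" using B(1,2) pairwise_orthogonal_imp_finite by (metis norm_zero zero_neq_one)
  moreover have "\<forall>b\<in>B. \<forall>\<xi>\<in>a. \<xi> *v b = (b \<bullet> (\<xi> *v b)) *\<^sub>R b"
  proof (intro ballI)
    fix b \<xi> assume "b \<in> B" "\<xi> \<in> a"
    then obtain c where c: "\<xi> *v b = c *\<^sub>R b" using B(4) by blast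
    have "b \<bullet> b = 1" using B(2) \<open>b \<in> B\<close> by (simp add: norm_eq_1)
    then show "\<xi> *v b = (b \<bullet> (\<xi> *v b)) *\<^sub>R b" using c by simp
  qed
  ultimately show ?thesis using B by blast
qed

definition lam :: "real^'n \<Rightarrow> real^'n^'n \<Rightarrow> real" where
  "lam b \<xi> = b \<bullet> (\<xi> *v b)"

lemma lam_lin: "lam b (\<xi> + t *\<^sub>R \<eta>) = lam b \<xi> + t * lam b \<eta>"
  by (simp add: lam_def matrix_vector_mult_add_rdistrib inner_add_right scaleR_matrix_vector_assoc[symmetric])

lemma lam_add: "lam b (\<xi> + \<eta>) = lam b \<xi> + lam b \<eta>"
  using lam_lin[of b \<xi> 1 \<eta>] by simp

lemma lam_scale: "lam b (t *\<^sub>R \<eta>) = t * lam b \<eta>"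
  using lam_lin[of b 0 t \<eta>] by (simp add: lam_def)

lemma msum_mv:
  fixes f :: "'i \<Rightarrow> real^'n^'n"
  shows "(\<Sum>s\<in>S. f s) *v x = (\<Sum>s\<in>S. f s *v x)"
  by (induction S rule: infinite_finite_induct) (auto simp: matrix_vector_mult_add_rdistrib)

definition Pm :: "real^'n \<Rightarrow> real^'n^'n" where
  "Pm b = (\<chi> i j. b$i * b$j)"

lemma Pm_mv: "Pm b *v x = (b \<bullet> x) *\<^sub>R b"
  by (simp add: Pm_def matrix_vector_mult_def inner_vec_def vec_eq_iff sum_distrib_left mult.commute mult.left_commute)

locale wsetup =
  fixes a :: "(real^'n^'n) set" and B :: "(real^'n) set"
  assumes sub: "subspace a" and finB: "finite B" and orth: "pairwise orthogonal B"
    and unit: "\<forall>b\<in>B. norm b = 1" and spanB: "span B = UNIV"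
    and eig: "\<forall>b\<in>B. \<forall>\<xi>\<in>a. \<xi> *v b = lam b \<xi> *\<^sub>R b"
begin

lemma expand: "x = (\<Sum>b\<in>B. (b \<bullet> x) *\<^sub>R b)"
  using orthonormal_basis_expand[OF orth _ _ finB, of x] unit spanB by (simp add: inner_commute)

lemma inner_B: "b \<in> B \<Longrightarrow> b' \<in> B \<Longrightarrow> b \<bullet> b' = (if b = b' then 1 else 0)"
  using orth unit by (auto simp: pairwise_def orthogonal_def norm_eq_1)

lemma coord: "b' \<in> B \<Longrightarrow> b' \<bullet> (\<Sum>b\<in>B. f b *\<^sub>R b) = f b'"
proof -
  assume "b' \<in> B"
  have "b' \<bullet> (\<Sum>b\<in>B. f b *\<^sub>R b) = (\<Sum>b\<in>B. f b * (b' \<bullet> b))" by (simp add: inner_sum_right)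
  also have "\<dots> = (\<Sum>b\<in>B. if b = b' then f b else 0)"
    using \<open>b' \<in> B\<close> inner_B by (intro sum.cong) auto
  also have "\<dots> = f b'" using \<open>b' \<in> B\<close> finB by simp
  finally show ?thesis .
qed

lemma act: "\<xi> \<in> a \<Longrightarrow> \<xi> *v x = (\<Sum>b\<in>B. (lam b \<xi> * (b \<bullet> x)) *\<^sub>R b)"
proof -
  assume "\<xi> \<in> a"
  have "\<xi> *v x = \<xi> *v (\<Sum>b\<in>B. (b \<bullet> x) *\<^sub>R b)" using expand by metis
  also have "\<dots> = (\<Sum>b\<in>B. (b \<bullet> x) *\<^sub>R (\<xi> *v b))" by (simp add: vec.sum matrix_vector_mult_scaleR)
  also have "\<dots> = (\<Sum>b\<in>B. (lam b \<xi> * (b \<bullet> x)) *\<^sub>R b)"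
    using eig \<open>\<xi> \<in> a\<close> by (intro sum.cong) (auto simp: mult.commute)
  finally show ?thesis .
qed

lemma normsq: "x \<bullet> x = (\<Sum>b\<in>B. (b \<bullet> x)^2)"
proof -
  have "x \<bullet> x = x \<bullet> (\<Sum>b\<in>B. (b \<bullet> x) *\<^sub>R b)" using expand by metis
  also have "\<dots> = (\<Sum>b\<in>B. (b \<bullet> x)^2)" by (simp add: inner_sum_right power2_eq_square inner_commute)
  finally show ?thesis .
qed

lemma mu_formula: "\<xi> \<in> a \<Longrightarrow> moment_map a x \<xi> = (\<Sum>b\<in>B. lam b \<xi> * (b \<bullet> x)^2)"
proof -
  assume "\<xi> \<in> a"
  have "moment_map a x \<xi> = (\<xi> *v x) \<bullet> x" using \<open>\<xi> \<in> a\<close> by (simp add: moment_map_def)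
  also have "\<dots> = (\<Sum>b\<in>B. (lam b \<xi> * (b \<bullet> x)) * (b \<bullet> x))"
    by (simp add: act[OF \<open>\<xi> \<in> a\<close>] inner_sum_left)
  also have "\<dots> = (\<Sum>b\<in>B. lam b \<xi> * (b \<bullet> x)^2)" by (simp add: power2_eq_square mult.assoc)
  finally show ?thesis .
qed

lemma mat_pow_form: "\<xi> \<in> a \<Longrightarrow> mat_pow \<xi> k = (\<Sum>b\<in>B. (lam b \<xi> ^ k) *\<^sub>R Pm b)"
proof (induction k)
  case 0
  show ?case unfolding matrix_eq
  proof
    fix x
    have "(\<Sum>b\<in>B. (lam b \<xi> ^ 0) *\<^sub>R Pm b) *v x = (\<Sum>b\<in>B. (b \<bullet> x) *\<^sub>R b)"
      by (simp add: msum_mv Pm_mv)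
    then show "mat_pow \<xi> 0 *v x = (\<Sum>b\<in>B. lam b \<xi> ^ 0 *\<^sub>R Pm b) *v x"
      using expand[of x] by (simp add: matrix_vector_mul_lid)
  qed
next
  case (Suc k)
  show ?case unfolding matrix_eq
  proof
    fix x
    have "mat_pow \<xi> (Suc k) *v x = \<xi> *v (mat_pow \<xi> k *v x)"
      by (simp add: matrix_vector_mul_assoc)
    also have "\<dots> = \<xi> *v (\<Sum>b\<in>B. (lam b \<xi> ^ k * (b \<bullet> x)) *\<^sub>R b)"
      using Suc by (simp add: msum_mv Pm_mv scaleR_matrix_vector_assoc[symmetric])
    also have "\<dots> = (\<Sum>b\<in>B. (lam b \<xi> ^ Suc k * (b \<bullet> x)) *\<^sub>R b)"
      using eig Suc.prems by (simp add: vec.sum matrix_vector_mult_scaleR mult.commute mult.left_commute)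
    also have "\<dots> = (\<Sum>b\<in>B. (lam b \<xi> ^ Suc k) *\<^sub>R Pm b) *v x"
      by (simp add: msum_mv Pm_mv scaleR_matrix_vector_assoc[symmetric])
    finally show "mat_pow \<xi> (Suc k) *v x = (\<Sum>b\<in>B. (lam b \<xi> ^ Suc k) *\<^sub>R Pm b) *v x" .
  qed
qed

lemma mexp_form: "\<xi> \<in> a \<Longrightarrow> mexp \<xi> = (\<Sum>b\<in>B. exp (lam b \<xi>) *\<^sub>R Pm b)"
proof -
  assume xa: "\<xi> \<in> a"
  have "(\<lambda>k. (1 / fact k) *\<^sub>R mat_pow \<xi> k) = (\<lambda>k. \<Sum>b\<in>B. (lam b \<xi> ^ k /\<^sub>R fact k) *\<^sub>R Pm b)"
    using mat_pow_form[OF xa] by (simp add: scaleR_sum_right divide_inverse_commute)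
  moreover have "(\<lambda>k. \<Sum>b\<in>B. (lam b \<xi> ^ k /\<^sub>R fact k) *\<^sub>R Pm b) sums (\<Sum>b\<in>B. exp (lam b \<xi>) *\<^sub>R Pm b)"
    by (intro sums_sum sums_scaleR_left exp_converges)
  ultimately show ?thesis unfolding mexp_def by (simp add: sums_iff)
qed

lemma mexp_act: "\<xi> \<in> a \<Longrightarrow> mexp \<xi> *v x = (\<Sum>b\<in>B. (exp (lam b \<xi>) * (b \<bullet> x)) *\<^sub>R b)"
  by (simp add: mexp_form msum_mv Pm_mv scaleR_matrix_vector_assoc[symmetric])

lemma mexp_coord: "\<xi> \<in> a \<Longrightarrow> b \<in> B \<Longrightarrow> b \<bullet> (mexp \<xi> *v x) = exp (lam b \<xi>) * (b \<bullet> x)"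
  by (simp add: mexp_act coord)

end

lemma exp2_ge: "(s::real) \<ge> 0 \<Longrightarrow> exp (2 * s) \<ge> s^2"
proof -
  assume "s \<ge> 0"
  have "1 + s \<le> exp s" by (rule exp_ge_add_one_self)
  hence "s \<le> exp s" by linarith
  hence "s^2 \<le> (exp s)^2" using \<open>s \<ge> 0\<close> by (simp add: power_mono)
  thus ?thesis by (simp add: exp_double)
qed

lemma L1:
  fixes m d D s :: real
  assumes "m > 0" "0 \<le> d" "d \<le> D"
  shows "m * exp (2 * s) - 2 * d * s \<ge> m * exp (2 * s) / 2 - 2 * D^2 / m"
proof (cases "s \<le> 0")
  case True
  have "- 2 * d * s \<ge> 0" using True assms by (simp add: mult_nonneg_nonpos)
  moreover have "m * exp (2 * s) / 2 \<ge> 0" "2 * D^2 / m \<ge> 0" using assms by auto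
  ultimately show ?thesis by linarith
next
  case False
  have "m * exp (2 * s) / 2 \<ge> m * s^2 / 2" using exp2_ge[of s] False assms(1) by simp
  moreover have "m * s^2 / 2 - 2 * D * s + 2 * D^2 / m \<ge> 0"
  proof -
    have "m * s^2 / 2 - 2 * D * s + 2 * D^2 / m = (m * s - 2 * D)^2 / (2 * m)"
      using assms(1) by (simp add: field_simps power2_eq_square)
    thus ?thesis using assms(1) by simp
  qed
  moreover have "2 * d * s \<le> 2 * D * s" using False assms by (simp add: mult_right_mono)
  ultimately show ?thesis by linarith
qed

lemma coerc:
  fixes m d M :: real
  assumes "m > 0" "d > 0"
  shows "\<exists>R. \<forall>s. m * exp (2 * s) - 2 * d * s \<le> M \<longrightarrow> \<bar>s\<bar> \<le> R"
proof -
  define R where "R = max (\<bar>M\<bar> / (2 * d)) \<bar>(2 * (M + 2 * d^2 / m) / m - 1) / 2\<bar>"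
  have "\<bar>s\<bar> \<le> R" if T: "m * exp (2 * s) - 2 * d * s \<le> M" for s
  proof -
    have "m * exp (2 * s) > 0" using assms by simp
    hence "- 2 * d * s \<le> M" using T by linarith
    hence lo: "- s \<le> \<bar>M\<bar> / (2 * d)" using assms(2) by (simp add: field_simps)
    have "m * exp (2 * s) / 2 - 2 * d^2 / m \<le> M" using L1[of m d d s] assms T by linarith
    hence "exp (2 * s) \<le> 2 * (M + 2 * d^2 / m) / m" using assms(1) by (simp add: field_simps)
    moreover have "1 + 2 * s \<le> exp (2 * s)" by (rule exp_ge_add_one_self)
    ultimately have "1 + 2 * s \<le> 2 * (M + 2 * d^2 / m) / m" by linarith
    hence hi: "s \<le> (2 * (M + 2 * d^2 / m) / m - 1) / 2" by (simp add: field_simps)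
    show ?thesis using lo hi unfolding R_def by linarith
  qed
  thus ?thesis by blast
qed

lemma linear_lam: "linear (lam b)"
  by (rule linearI) (simp_all add: lam_add lam_scale)

lemma cont_lam: "continuous_on S (lam b)"
  using linear_lam linear_continuous_on linear_conv_bounded_linear by blast

context wsetup
begin

lemma minimizer:
  fixes x :: "real^'n" and d :: "real^'n \<Rightarrow> real"
  defines "J \<equiv> {b\<in>B. b \<bullet> x \<noteq> 0}"
  assumes dpos: "\<And>b. b \<in> J \<Longrightarrow> d b > 0"
  shows "\<exists>\<xi>\<in>a. (\<Sum>b\<in>J. (b \<bullet> x)^2 * exp (2 * lam b \<xi>) - 2 * d b * lam b \<xi>) \<le> (\<Sum>b\<in>J. (b \<bullet> x)^2)
       \<and> (\<forall>\<eta>\<in>a. (\<Sum>b\<in>J. (b \<bullet> x)^2 * exp (2 * lam b \<xi>) * lam b \<eta>) = (\<Sum>b\<in>J. d b * lam b \<eta>))"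
proof -
  define m where "m b = (b \<bullet> x)^2" for b
  have mpos: "m b > 0" if "b \<in> J" for b using that by (simp add: m_def J_def)
  have finJ: "finite J" using finB by (simp add: J_def)
  define T where "T b s = m b * exp (2 * s) - 2 * d b * s" for b s
  define G where "G \<xi> = (\<Sum>b\<in>J. T b (lam b \<xi>))" for \<xi>
  have G0: "G 0 = (\<Sum>b\<in>J. m b)" by (simp add: G_def T_def lam_def)
  have contG: "continuous_on S G" for S
    unfolding G_def T_def by (intro continuous_intros cont_lam)
  define N where "N = {\<xi>\<in>a. \<forall>b\<in>J. lam b \<xi> = 0}"
  define a1 where "a1 = {\<xi>\<in>a. \<forall>\<nu>\<in>N. \<xi> \<bullet> \<nu> = 0}"
  have subN: "subspace N" unfolding N_def subspace_def using sub
    by (auto simp: subspace_0 subspace_add subspace_scale lam_add lam_scale) (simp add: lam_def)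
  have suba1: "subspace a1" unfolding a1_def subspace_def using sub
    by (auto simp: subspace_0 subspace_add subspace_scale inner_add_left)
  have Na: "N \<subseteq> a" by (auto simp: N_def)
  define K where "K = {\<xi>\<in>a1. G \<xi> \<le> G 0}"
  have closedK: "closed K" unfolding K_def
    by (intro continuous_on_closed_Collect_le contG continuous_on_const closed_subspace suba1)
  define lb where "lb b = - 2 * (d b)^2 / m b" for b
  have Tlb: "T b s \<ge> lb b" if "b \<in> J" for b s
  proof -
    have "T b s \<ge> m b * exp (2 * s) / 2 - 2 * (d b)^2 / m b"
      unfolding T_def using L1[of "m b" "d b" "d b" s] mpos[OF that] dpos[OF that] by linarith
    moreover have "m b * exp (2 * s) / 2 \<ge> 0" using mpos[OF that] by simp
    ultimately show ?thesis unfolding lb_def by linarith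
  qed
  define M0 where "M0 = (\<Sum>b\<in>J. m b) - (\<Sum>b\<in>J. lb b) + Max ((\<lambda>b. \<bar>lb b\<bar>) ` J \<union> {0})"
  have Tub: "T b (lam b \<xi>) \<le> M0" if "b \<in> J" "\<xi> \<in> K" for b \<xi>
  proof -
    have "G \<xi> \<le> (\<Sum>b\<in>J. m b)" using that(2) G0 by (simp add: K_def)
    moreover have "G \<xi> = T b (lam b \<xi>) + (\<Sum>b'\<in>J - {b}. T b' (lam b' \<xi>))"
      unfolding G_def using finJ that(1) by (simp add: sum.remove)
    moreover have "(\<Sum>b'\<in>J - {b}. T b' (lam b' \<xi>)) \<ge> (\<Sum>b'\<in>J - {b}. lb b')"
      using Tlb by (intro sum_mono) auto
    moreover have "(\<Sum>b\<in>J. lb b) = lb b + (\<Sum>b'\<in>J - {b}. lb b')"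
      using finJ that(1) by (simp add: sum.remove)
    moreover have "\<bar>lb b\<bar> \<le> Max ((\<lambda>b. \<bar>lb b\<bar>) ` J \<union> {0})"
      using finJ that(1) by (intro Max_ge) auto
    ultimately show ?thesis unfolding M0_def by linarith
  qed
  have "\<forall>b\<in>J. \<exists>R. \<forall>s. T b s \<le> M0 \<longrightarrow> \<bar>s\<bar> \<le> R"
    using coerc mpos dpos unfolding T_def by blast
  then obtain R where R: "\<And>b s. b \<in> J \<Longrightarrow> T b s \<le> M0 \<Longrightarrow> \<bar>s\<bar> \<le> R b" by metis
  have lamK: "\<bar>lam b \<xi>\<bar> \<le> R b" if "b \<in> J" "\<xi> \<in> K" for b \<xi> using R Tub that by blast
  have bl: "bounded_linear (\<lambda>\<xi>::real^'n^'n. \<xi> *v x)"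
    unfolding linear_conv_bounded_linear[symmetric]
    by (rule linearI) (simp_all add: matrix_vector_mult_add_rdistrib scaleR_matrix_vector_assoc)
  have inj0: "\<forall>\<xi>\<in>a1. \<xi> *v x = 0 \<longrightarrow> \<xi> = 0"
  proof (intro ballI impI)
    fix \<xi> assume xi: "\<xi> \<in> a1" "\<xi> *v x = 0"
    have "\<xi> \<in> a" using xi by (simp add: a1_def)
    have "lam b \<xi> = 0" if "b \<in> J" for b
    proof -
      have "b \<bullet> (\<xi> *v x) = lam b \<xi> * (b \<bullet> x)"
        using that act[OF \<open>\<xi> \<in> a\<close>, of x] coord[of b] by (simp add: J_def)
      then show ?thesis using xi(2) that by (simp add: J_def)
    qed
    hence "\<xi> \<in> N" using \<open>\<xi> \<in> a\<close> by (simp add: N_def)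
    hence "\<xi> \<bullet> \<xi> = 0" using xi(1) by (simp add: a1_def)
    thus "\<xi> = 0" by simp
  qed
  obtain e where e: "e > 0" "\<And>\<xi>. \<xi> \<in> a1 \<Longrightarrow> e * norm \<xi> \<le> norm (\<xi> *v x)"
    using injective_imp_isometric[OF closed_subspace[OF suba1] suba1 bl inj0] by blast
  have nb: "norm (\<xi> *v x) \<le> (\<Sum>b\<in>J. R b * \<bar>b \<bullet> x\<bar>)" if "\<xi> \<in> K" for \<xi>
  proof -
    have "\<xi> \<in> a" using that by (simp add: K_def a1_def)
    have "\<xi> *v x = (\<Sum>b\<in>J. (lam b \<xi> * (b \<bullet> x)) *\<^sub>R b)"
      unfolding act[OF \<open>\<xi> \<in> a\<close>] J_def using finB by (intro sum.mono_neutral_right) auto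
    also have "norm \<dots> \<le> (\<Sum>b\<in>J. norm ((lam b \<xi> * (b \<bullet> x)) *\<^sub>R b))" by (rule norm_sum)
    also have "\<dots> = (\<Sum>b\<in>J. \<bar>lam b \<xi>\<bar> * \<bar>b \<bullet> x\<bar>)"
      using unit by (intro sum.cong) (auto simp: J_def abs_mult)
    also have "\<dots> \<le> (\<Sum>b\<in>J. R b * \<bar>b \<bullet> x\<bar>)"
      using lamK[OF _ that] by (intro sum_mono mult_right_mono) auto
    finally show ?thesis .
  qed
  have "bounded K"
    unfolding bounded_iff
  proof (intro exI ballI)
    fix \<xi> assume "\<xi> \<in> K"
    hence "e * norm \<xi> \<le> (\<Sum>b\<in>J. R b * \<bar>b \<bullet> x\<bar>)" using e(2) nb by (force simp: K_def)
    thus "norm \<xi> \<le> (\<Sum>b\<in>J. R b * \<bar>b \<bullet> x\<bar>) / e" using e(1) by (simp add: field_simps)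
  qed
  hence "compact K" using closedK by (simp add: compact_eq_bounded_closed)
  moreover have "0 \<in> K" using suba1 by (simp add: K_def subspace_0)
  ultimately obtain \<xi>s where xs: "\<xi>s \<in> K" "\<And>\<xi>. \<xi> \<in> K \<Longrightarrow> G \<xi>s \<le> G \<xi>"
    using continuous_attains_inf[of K G] contG by blast
  have xsa: "\<xi>s \<in> a" using xs(1) by (simp add: K_def a1_def)
  have glob: "G \<xi>s \<le> G \<xi>" if "\<xi> \<in> a" for \<xi>
  proof -
    obtain y z where yz: "y \<in> span N" "\<And>w. w \<in> span N \<Longrightarrow> orthogonal z w" "\<xi> = y + z"
      using orthogonal_subspace_decomp_exists by metis
    have spN: "span N = N" using subN by (simp add: span_eq_iff)
    have "y \<in> N" using yz(1) spN by simp
    have "z \<in> a" using yz(3) \<open>y \<in> N\<close> Na that sub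
      by (metis add_diff_cancel_left' subsetD subspace_diff)
    have "z \<in> a1" using \<open>z \<in> a\<close> yz(2) spN
      by (auto simp: a1_def orthogonal_def)
    have "G \<xi> = G z"
      unfolding G_def yz(3) using \<open>y \<in> N\<close> by (intro sum.cong) (auto simp: lam_add N_def)
    show ?thesis
    proof (cases "G z \<le> G 0")
      case True
      then have "z \<in> K" using \<open>z \<in> a1\<close> by (simp add: K_def)
      then show ?thesis using xs(2) \<open>G \<xi> = G z\<close> by simp
    next
      case False
      then show ?thesis using xs(1) \<open>G \<xi> = G z\<close> by (simp add: K_def)
    qed
  qed
  have crit: "(\<Sum>b\<in>J. m b * exp (2 * lam b \<xi>s) * lam b \<eta>) = (\<Sum>b\<in>J. d b * lam b \<eta>)" if "\<eta> \<in> a" for \<eta>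
  proof -
    define f where "f t = G (\<xi>s + t *\<^sub>R \<eta>)" for t
    have f_eq: "f = (\<lambda>t. \<Sum>b\<in>J. m b * exp (2 * (lam b \<xi>s + t * lam b \<eta>)) - 2 * d b * (lam b \<xi>s + t * lam b \<eta>))"
      by (simp add: f_def G_def T_def lam_lin fun_eq_iff)
    have der: "(f has_real_derivative (\<Sum>b\<in>J. m b * (exp (2 * (lam b \<xi>s + 0 * lam b \<eta>)) * (2 * lam b \<eta>)) - 2 * d b * lam b \<eta>)) (at 0)"
      unfolding f_eq by (auto intro!: derivative_eq_intros sum.cong simp: algebra_simps)
    have mn: "\<forall>t. \<bar>0 - t\<bar> < 1 \<longrightarrow> f 0 \<le> f t"
      using glob sub that xsa by (auto simp: f_def subspace_add subspace_scale)
    have "(\<Sum>b\<in>J. m b * (exp (2 * (lam b \<xi>s + 0 * lam b \<eta>)) * (2 * lam b \<eta>)) - 2 * d b * lam b \<eta>) = 0"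
      by (rule DERIV_local_min[OF der zero_less_one mn])
    hence "2 * ((\<Sum>b\<in>J. m b * exp (2 * lam b \<xi>s) * lam b \<eta>) - (\<Sum>b\<in>J. d b * lam b \<eta>)) = 0"
      by (simp add: sum_subtractf sum_distrib_left algebra_simps)
    thus ?thesis by simp
  qed
  have "G \<xi>s \<le> (\<Sum>b\<in>J. m b)" using xs(1) G0 by (simp add: K_def)
  then show ?thesis using xsa crit unfolding G_def T_def m_def by blast
qed

end

context wsetup
begin

definition cf :: "(real^'n) set \<Rightarrow> (real^'n^'n \<Rightarrow> real) set" where
  "cf K = {f. \<exists>c. (\<forall>b\<in>B. 0 \<le> c b) \<and> (\<forall>b\<in>B - K. c b = 0) \<and>
               f = (\<lambda>\<xi>. if \<xi> \<in> a then (\<Sum>b\<in>B. c b * lam b \<xi>) else 0)}"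

lemma cf_mono: "K \<subseteq> K' \<Longrightarrow> cf K \<subseteq> cf K'"
  unfolding cf_def by blast

lemma mu_in_cf: "moment_map a z \<in> cf {b\<in>B. b \<bullet> z \<noteq> 0}"
  unfolding cf_def
proof (rule CollectI, rule exI[of _ "\<lambda>b. (b \<bullet> z)^2"], intro conjI)
  show "moment_map a z = (\<lambda>\<xi>. if \<xi> \<in> a then \<Sum>b\<in>B. (b \<bullet> z)\<^sup>2 * lam b \<xi> else 0)"
  proof
    fix \<xi>
    show "moment_map a z \<xi> = (if \<xi> \<in> a then \<Sum>b\<in>B. (b \<bullet> z)\<^sup>2 * lam b \<xi> else 0)"
      by (cases "\<xi> \<in> a") (simp_all add: mu_formula mult.commute, simp add: moment_map_def)
  qed
next
  show "\<forall>b\<in>B. 0 \<le> (b \<bullet> z)\<^sup>2" by simp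
  show "\<forall>b\<in>B - {b \<in> B. b \<bullet> z \<noteq> 0}. (b \<bullet> z)\<^sup>2 = 0" by simp
qed

lemma range_mu: "range (moment_map a) = cf B"
proof
  show "range (moment_map a) \<subseteq> cf B"
  proof
    fix f assume "f \<in> range (moment_map a)"
    then obtain z where z: "f = moment_map a z" by blast
    have "cf {b\<in>B. b \<bullet> z \<noteq> 0} \<subseteq> cf B" by (rule cf_mono) auto
    then show "f \<in> cf B" using mu_in_cf[of z] z by blast
  qed
  show "cf B \<subseteq> range (moment_map a)"
  proof
    fix f assume "f \<in> cf B"
    then obtain c where c: "\<forall>b\<in>B. 0 \<le> c b"
      "f = (\<lambda>\<xi>. if \<xi> \<in> a then (\<Sum>b\<in>B. c b * lam b \<xi>) else 0)" by (auto simp: cf_def)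
    define z where "z = (\<Sum>b\<in>B. sqrt (c b) *\<^sub>R b)"
    have bz: "b \<bullet> z = sqrt (c b)" if "b \<in> B" for b using coord[OF that] by (simp add: z_def)
    have "moment_map a z = f"
    proof
      fix \<xi>
      show "moment_map a z \<xi> = f \<xi>"
      proof (cases "\<xi> \<in> a")
        case True
        have "moment_map a z \<xi> = (\<Sum>b\<in>B. lam b \<xi> * (b \<bullet> z)^2)" by (rule mu_formula[OF True])
        also have "\<dots> = (\<Sum>b\<in>B. c b * lam b \<xi>)"
          using c(1) \<open>\<And>b. b \<in> B \<Longrightarrow> b \<bullet> z = sqrt (c b)\<close> by (intro sum.cong) simp_all
        finally show ?thesis using True c(2) by simp
      next
        case False
        then show ?thesis using c(2) by (simp add: moment_map_def)
      qed
    qed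
    thus "f \<in> range (moment_map a)" by blast
  qed
qed

lemma orbit_sub_cf: "moment_map a ` closure (orbit_A a x) \<subseteq> cf {b\<in>B. b \<bullet> x \<noteq> 0}"
proof -
  define Z where "Z = {z. \<forall>b. b \<in> B - {b\<in>B. b \<bullet> x \<noteq> 0} \<longrightarrow> b \<bullet> z = 0}"
  have "closed Z" unfolding Z_def
  proof (rule closed_Collect_all)
    fix b
    show "closed {z. b \<in> B - {b \<in> B. b \<bullet> x \<noteq> 0} \<longrightarrow> b \<bullet> z = 0}"
      by (cases "b \<in> B - {b \<in> B. b \<bullet> x \<noteq> 0}") (simp_all add: closed_hyperplane)
  qed
  moreover have "orbit_A a x \<subseteq> Z"
    by (auto simp: orbit_A_def Z_def mexp_coord)
  ultimately have "closure (orbit_A a x) \<subseteq> Z" by (rule closure_minimal[rotated])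
  moreover have "{b\<in>B. b \<bullet> z \<noteq> 0} \<subseteq> {b\<in>B. b \<bullet> x \<noteq> 0}" if "z \<in> Z" for z
    using that by (auto simp: Z_def)
  ultimately have zsub: "{b\<in>B. b \<bullet> z \<noteq> 0} \<subseteq> {b\<in>B. b \<bullet> x \<noteq> 0}"
    if "z \<in> closure (orbit_A a x)" for z using that by blast
  show ?thesis
  proof
    fix f assume "f \<in> moment_map a ` closure (orbit_A a x)"
    then obtain z where z: "z \<in> closure (orbit_A a x)" "f = moment_map a z" by blast
    show "f \<in> cf {b\<in>B. b \<bullet> x \<noteq> 0}"
      using mu_in_cf[of z] cf_mono[OF zsub[OF z(1)]] z(2) by blast
  qed
qed

end

context wsetup
begin

lemma cf_sub_orbit: "cf {b\<in>B. b \<bullet> x \<noteq> 0} \<subseteq> moment_map a ` closure (orbit_A a x)"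
proof
  fix f assume "f \<in> cf {b\<in>B. b \<bullet> x \<noteq> 0}"
  then obtain c where c: "\<forall>b\<in>B. 0 \<le> c b" "\<forall>b\<in>B - {b\<in>B. b \<bullet> x \<noteq> 0}. c b = 0"
      "f = (\<lambda>\<xi>. if \<xi> \<in> a then (\<Sum>b\<in>B. c b * lam b \<xi>) else 0)" unfolding cf_def by blast
  define J where "J = {b\<in>B. b \<bullet> x \<noteq> 0}"
  have finJ: "finite J" using finB by (simp add: J_def)
  define m where "m b = (b \<bullet> x)^2" for b
  have mpos: "m b > 0" if "b \<in> J" for b using that by (simp add: m_def J_def)
  define dk where "dk k b = c b + 1 / real (Suc k)" for k b
  have dkpos: "dk k b > 0" if "b \<in> J" for k b
    using c(1) that by (auto simp: dk_def J_def intro!: add_nonneg_pos)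
  have ex: "\<exists>\<xi>. \<xi> \<in> a \<and> (\<Sum>b\<in>J. (b \<bullet> x)^2 * exp (2 * lam b \<xi>) - 2 * dk k b * lam b \<xi>) \<le> (\<Sum>b\<in>J. (b \<bullet> x)^2)
       \<and> (\<forall>\<eta>\<in>a. (\<Sum>b\<in>J. (b \<bullet> x)^2 * exp (2 * lam b \<xi>) * lam b \<eta>) = (\<Sum>b\<in>J. dk k b * lam b \<eta>))" for k
  proof -
    have "\<exists>\<xi>\<in>a. (\<Sum>b\<in>J. (b \<bullet> x)^2 * exp (2 * lam b \<xi>) - 2 * dk k b * lam b \<xi>) \<le> (\<Sum>b\<in>J. (b \<bullet> x)^2)
       \<and> (\<forall>\<eta>\<in>a. (\<Sum>b\<in>J. (b \<bullet> x)^2 * exp (2 * lam b \<xi>) * lam b \<eta>) = (\<Sum>b\<in>J. dk k b * lam b \<eta>))"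
      unfolding J_def by (rule minimizer, rule dkpos[unfolded J_def])
    then show ?thesis by (simp only: Bex_def)
  qed
  obtain \<xi>s where xsall: "\<forall>k. \<xi>s k \<in> a \<and> (\<Sum>b\<in>J. (b \<bullet> x)^2 * exp (2 * lam b (\<xi>s k)) - 2 * dk k b * lam b (\<xi>s k)) \<le> (\<Sum>b\<in>J. (b \<bullet> x)^2)
       \<and> (\<forall>\<eta>\<in>a. (\<Sum>b\<in>J. (b \<bullet> x)^2 * exp (2 * lam b (\<xi>s k)) * lam b \<eta>) = (\<Sum>b\<in>J. dk k b * lam b \<eta>))"
  proof -
    have exall: "\<forall>k. \<exists>\<xi>. \<xi> \<in> a \<and> (\<Sum>b\<in>J. (b \<bullet> x)^2 * exp (2 * lam b \<xi>) - 2 * dk k b * lam b \<xi>) \<le> (\<Sum>b\<in>J. (b \<bullet> x)^2)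
       \<and> (\<forall>\<eta>\<in>a. (\<Sum>b\<in>J. (b \<bullet> x)^2 * exp (2 * lam b \<xi>) * lam b \<eta>) = (\<Sum>b\<in>J. dk k b * lam b \<eta>))"
      using ex by (intro allI)
    show ?thesis using choice[OF exall] that by blast
  qed
  have xs: "\<And>k. \<xi>s k \<in> a"
    "\<And>k. (\<Sum>b\<in>J. m b * exp (2 * lam b (\<xi>s k)) - 2 * dk k b * lam b (\<xi>s k)) \<le> (\<Sum>b\<in>J. m b)"
    "\<And>k \<eta>. \<eta> \<in> a \<Longrightarrow> (\<Sum>b\<in>J. m b * exp (2 * lam b (\<xi>s k)) * lam b \<eta>) = (\<Sum>b\<in>J. dk k b * lam b \<eta>)"
    using xsall unfolding m_def by auto
  define y where "y k = mexp (\<xi>s k) *v x" for k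
  have yorb: "y k \<in> orbit_A a x" for k using xs(1) by (auto simp: y_def orbit_A_def)
  have ycoord: "(b \<bullet> y k)^2 = (if b \<in> J then m b * exp (2 * lam b (\<xi>s k)) else 0)" if "b \<in> B" for b k
    using that mexp_coord[OF xs(1) that, of k x]
    by (auto simp: y_def J_def m_def power_mult_distrib exp_double mult.commute)
  have sumBJ: "(\<Sum>b\<in>B. g b * (b \<bullet> y k)^2) = (\<Sum>b\<in>J. g b * (m b * exp (2 * lam b (\<xi>s k))))" for g k
  proof -
    have "(\<Sum>b\<in>B. g b * (b \<bullet> y k)^2) = (\<Sum>b\<in>B. if b \<in> J then g b * (m b * exp (2 * lam b (\<xi>s k))) else 0)"
      using ycoord by (intro sum.cong) auto
    also have "\<dots> = (\<Sum>b\<in>J. g b * (m b * exp (2 * lam b (\<xi>s k))))"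
      using finB by (simp add: sum.If_cases J_def Int_def)
    finally show ?thesis .
  qed
  have muy: "moment_map a (y k) \<eta> = (\<Sum>b\<in>J. dk k b * lam b \<eta>)" if "\<eta> \<in> a" for k \<eta>
  proof -
    have "moment_map a (y k) \<eta> = (\<Sum>b\<in>B. lam b \<eta> * (b \<bullet> y k)^2)" by (rule mu_formula[OF that])
    also have "\<dots> = (\<Sum>b\<in>J. lam b \<eta> * (m b * exp (2 * lam b (\<xi>s k))))" by (rule sumBJ)
    also have "\<dots> = (\<Sum>b\<in>J. m b * exp (2 * lam b (\<xi>s k)) * lam b \<eta>)" by (simp add: mult.commute)
    also have "\<dots> = (\<Sum>b\<in>J. dk k b * lam b \<eta>)" by (rule xs(3)[OF that])
    finally show ?thesis .
  qed
  define Rb where "Rb = 2 * (\<Sum>b\<in>J. m b) + 4 * (\<Sum>b\<in>J. (c b + 1)^2 / m b)"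
  have ybound: "y k \<bullet> y k \<le> Rb" for k
  proof -
    have "y k \<bullet> y k = (\<Sum>b\<in>J. m b * exp (2 * lam b (\<xi>s k)))"
      using normsq[of "y k"] sumBJ[of "\<lambda>_. 1" k] by simp
    moreover have "(\<Sum>b\<in>J. m b * exp (2 * lam b (\<xi>s k)) / 2 - 2 * (c b + 1)^2 / m b)
        \<le> (\<Sum>b\<in>J. m b * exp (2 * lam b (\<xi>s k)) - 2 * dk k b * lam b (\<xi>s k))"
    proof (rule sum_mono)
      fix b assume "b \<in> J"
      have "0 \<le> dk k b" using dkpos[OF \<open>b \<in> J\<close>, of k] by simp
      moreover have "dk k b \<le> c b + 1" by (simp add: dk_def)
      ultimately show "m b * exp (2 * lam b (\<xi>s k)) / 2 - 2 * (c b + 1)^2 / m b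
          \<le> m b * exp (2 * lam b (\<xi>s k)) - 2 * dk k b * lam b (\<xi>s k)"
        using L1[OF mpos[OF \<open>b \<in> J\<close>]] by blast
    qed
    moreover have "(\<Sum>b\<in>J. m b * exp (2 * lam b (\<xi>s k)) / 2 - 2 * (c b + 1)^2 / m b)
        = (\<Sum>b\<in>J. m b * exp (2 * lam b (\<xi>s k))) / 2 - 2 * (\<Sum>b\<in>J. (c b + 1)^2 / m b)"
      by (simp add: sum_subtractf sum_divide_distrib sum_distrib_left)
    ultimately show ?thesis using xs(2)[of k] unfolding Rb_def by linarith
  qed
  have "Rb \<ge> 0" using ybound[of 0] by (metis inner_ge_zero order_trans)
  have ycb: "y k \<in> cball 0 (sqrt Rb)" for k
  proof -
    have "norm (y k) = sqrt (y k \<bullet> y k)" by (simp add: norm_eq_sqrt_inner)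
    also have "\<dots> \<le> sqrt Rb" using ybound[of k] by simp
    finally show ?thesis by simp
  qed
  obtain l r where lr: "l \<in> cball 0 (sqrt Rb)" "strict_mono r" "(y \<circ> r) \<longlonglongrightarrow> l"
    using compact_imp_seq_compact[OF compact_cball] ycb unfolding seq_compact_def by metis
  have lcl: "l \<in> closure (orbit_A a x)"
    unfolding closure_sequential using lr(3) yorb by (intro exI[of _ "y \<circ> r"]) auto
  have "moment_map a l = f"
  proof
    fix \<eta>
    show "moment_map a l \<eta> = f \<eta>"
    proof (cases "\<eta> \<in> a")
      case False
      then show ?thesis using c(3) by (simp add: moment_map_def)
    next
      case True
      have lim1: "(\<lambda>k. moment_map a ((y \<circ> r) k) \<eta>) \<longlonglongrightarrow> moment_map a l \<eta>"
        unfolding moment_map_def using True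
        using lr(3) by (simp add: o_def, intro tendsto_intros bounded_linear.tendsto[OF matrix_vector_mul_bounded_linear])
      have "(\<lambda>k. 1 / real (Suc k)) \<longlonglongrightarrow> 0"
        using LIMSEQ_inverse_real_of_nat by (simp add: inverse_eq_divide)
      hence inv: "(\<lambda>k. 1 / real (Suc (r k))) \<longlonglongrightarrow> 0"
        using LIMSEQ_subseq_LIMSEQ[OF _ lr(2)] by (simp add: o_def)
      have "(\<lambda>k. \<Sum>b\<in>J. dk (r k) b * lam b \<eta>) \<longlonglongrightarrow> (\<Sum>b\<in>J. (c b + 0) * lam b \<eta>)"
        unfolding dk_def by (intro tendsto_intros inv)
      hence lim2: "(\<lambda>k. moment_map a ((y \<circ> r) k) \<eta>) \<longlonglongrightarrow> (\<Sum>b\<in>J. c b * lam b \<eta>)"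
        using muy[OF True] by (simp add: dk_def)
      have "moment_map a l \<eta> = (\<Sum>b\<in>J. c b * lam b \<eta>)" using LIMSEQ_unique[OF lim1 lim2] .
      also have "\<dots> = (\<Sum>b\<in>B. c b * lam b \<eta>)"
        using c(2) finB by (intro sum.mono_neutral_left) (auto simp: J_def)
      finally show ?thesis using True c(3) by simp
    qed
  qed
  then show "f \<in> moment_map a ` closure (orbit_A a x)" using lcl by blast
qed

end

lemma dual_zero: "f \<in> dual_space a \<Longrightarrow> subspace a \<Longrightarrow> f 0 = 0"
proof -
  assume f: "f \<in> dual_space a" and s: "subspace a"
  have "0 \<in> a" using s by (rule subspace_0)
  hence "f (0 + 0) = f 0 + f 0" using f unfolding dual_space_def by blast
  thus "f 0 = 0" by simp
qed

lemma dual_sum: "f \<in> dual_space a \<Longrightarrow> subspace a \<Longrightarrow> (\<forall>i\<in>I. g i \<in> a) \<Longrightarrow>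
    f (\<Sum>i\<in>I. g i) = (\<Sum>i\<in>I. f (g i))"
proof (induction I rule: infinite_finite_induct)
  case (infinite I)
  have "f 0 = 0" by (rule dual_zero[OF infinite.prems(1,2)])
  then show ?case using infinite.hyps by simp
next
  case empty
  have "f 0 = 0" by (rule dual_zero[OF empty.prems(1,2)])
  then show ?case by simp
next
  case (insert i I)
  have gi: "g i \<in> a" using insert.prems(3) by simp
  have gI: "(\<Sum>i\<in>I. g i) \<in> a" using insert.prems(3) by (intro subspace_sum[OF insert.prems(2)]) simp
  have "f (g i + (\<Sum>i\<in>I. g i)) = f (g i) + f (\<Sum>i\<in>I. g i)"
    using insert.prems(1) gi gI unfolding dual_space_def by blast
  moreover have "f (\<Sum>i\<in>I. g i) = (\<Sum>i\<in>I. f (g i))"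
    using insert.IH insert.prems by simp
  ultimately show ?case using insert.hyps by simp
qed

lemma convex_cone_hull_sum:
  assumes "\<forall>i\<in>I. v i \<in> convex_cone hull S" "\<forall>i\<in>I. 0 \<le> c i"
  shows "(\<Sum>i\<in>I. c i *\<^sub>R v i) \<in> convex_cone hull S"
  using assms
proof (induction I rule: infinite_finite_induct)
  case (infinite I)
  then show ?case using convex_cone_hull_contains_0 by simp
next
  case empty
  then show ?case using convex_cone_hull_contains_0 by simp
next
  case (insert i I)
  have "c i *\<^sub>R v i \<in> convex_cone hull S" using insert.prems by (intro convex_cone_hull_mul) simp_all
  moreover have "(\<Sum>i\<in>I. c i *\<^sub>R v i) \<in> convex_cone hull S" using insert.IH insert.prems by simp
  ultimately show ?case using insert.hyps by (simp add: convex_cone_hull_add)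
qed

context wsetup
begin

lemma polyhedral: "polyhedral_dual a (cf B)"
proof -
  obtain Ea where Ea: "Ea \<subseteq> a" "pairwise orthogonal Ea" "\<And>x. x \<in> Ea \<Longrightarrow> norm x = 1" "span Ea = a"
    using orthonormal_basis_subspace[OF sub] by metis
  have finEa: "finite Ea" using Ea(2) pairwise_orthogonal_imp_finite by blast
  define rep where "rep f = (\<Sum>e\<in>Ea. f e *\<^sub>R e)" for f :: "real^'n^'n \<Rightarrow> real"
  have rep_in: "rep f \<in> a" for f
    unfolding rep_def using Ea(1) sub by (intro subspace_sum) (auto intro: subspace_scale)
  have rep_eq: "f \<xi> = rep f \<bullet> \<xi>" if "f \<in> dual_space a" "\<xi> \<in> a" for f \<xi>
  proof -
    have xi: "\<xi> = (\<Sum>e\<in>Ea. (\<xi> \<bullet> e) *\<^sub>R e)"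
      using orthonormal_basis_expand[OF Ea(2) Ea(3) _ finEa, of \<xi>] that(2) Ea(4) by simp
    have "f \<xi> = f (\<Sum>e\<in>Ea. (\<xi> \<bullet> e) *\<^sub>R e)" using xi by metis
    also have "\<dots> = (\<Sum>e\<in>Ea. f ((\<xi> \<bullet> e) *\<^sub>R e))"
      by (rule dual_sum[OF that(1) sub]) (use Ea(1) sub in \<open>auto intro: subspace_scale\<close>)
    also have "\<dots> = (\<Sum>e\<in>Ea. (\<xi> \<bullet> e) * f e)"
      using that(1) Ea(1) by (intro sum.cong) (auto simp: dual_space_def)
    also have "\<dots> = (\<Sum>e\<in>Ea. f e * (e \<bullet> \<xi>))" by (intro sum.cong) (simp_all add: inner_commute)
    also have "\<dots> = rep f \<bullet> \<xi>" by (simp add: rep_def inner_sum_left)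
    finally show ?thesis .
  qed
  define lfv where "lfv v = (\<lambda>\<xi>. if \<xi> \<in> a then v \<bullet> \<xi> else 0)" for v :: "real^'n^'n"
  have lfv_dual: "lfv v \<in> dual_space a" for v
    using sub by (auto simp: lfv_def dual_space_def inner_add_right subspace_add subspace_scale)
  define lf where "lf b = (\<lambda>\<xi>. if \<xi> \<in> a then lam b \<xi> else 0)" for b
  have lf_dual: "lf b \<in> dual_space a" for b
    using sub by (auto simp: lf_def dual_space_def lam_add lam_scale subspace_add subspace_scale)
  define w where "w b = rep (lf b)" for b
  have w_eq: "w b \<bullet> \<xi> = lam b \<xi>" if "\<xi> \<in> a" for b \<xi>
    using rep_eq[OF lf_dual that] that by (simp add: w_def lf_def)
  define C where "C = convex_cone hull (w ` B)"
  define D where "D = {z. \<exists>c. (\<forall>b\<in>B. 0 \<le> c b) \<and> z = (\<Sum>b\<in>B. c b *\<^sub>R w b)}"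
  have CD: "C = D"
  proof
    show "D \<subseteq> C"
    proof
      fix z assume "z \<in> D"
      then obtain c where c: "\<forall>b\<in>B. 0 \<le> c b" "z = (\<Sum>b\<in>B. c b *\<^sub>R w b)" by (auto simp: D_def)
      have "\<forall>b\<in>B. w b \<in> C" unfolding C_def by (auto intro: hull_inc)
      then show "z \<in> C" unfolding c(2) C_def using c(1) by (intro convex_cone_hull_sum) auto
    qed
    show "C \<subseteq> D"
      unfolding C_def
    proof (rule hull_minimal)
      show "w ` B \<subseteq> D"
      proof
        fix z assume "z \<in> w ` B"
        then obtain b0 where b0: "b0 \<in> B" "z = w b0" by blast
        have "(\<Sum>b\<in>B. (if b = b0 then 1 else 0) *\<^sub>R w b) = (\<Sum>b\<in>B. if b = b0 then w b else 0)"
          by (intro sum.cong) auto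
        hence "z = (\<Sum>b\<in>B. (if b = b0 then 1 else 0) *\<^sub>R w b)" using b0 finB by simp
        then show "z \<in> D" unfolding D_def by (intro CollectI exI[of _ "\<lambda>b. if b = b0 then 1 else 0"]) auto
      qed
      show "convex_cone D"
        unfolding convex_cone_def
      proof (intro conjI)
        have "0 \<in> D" unfolding D_def by (intro CollectI exI[of _ "\<lambda>b. 0"]) auto
        then show "D \<noteq> {}" by blast
        show "convex D" unfolding convex_def
        proof (intro ballI allI impI)
          fix x y assume xy: "x \<in> D" "y \<in> D"
          fix u v :: real assume uv: "0 \<le> u" "0 \<le> v" "u + v = 1"
          obtain c1 where c1: "\<forall>b\<in>B. 0 \<le> c1 b" "x = (\<Sum>b\<in>B. c1 b *\<^sub>R w b)" using xy(1) by (auto simp: D_def)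
          obtain c2 where c2: "\<forall>b\<in>B. 0 \<le> c2 b" "y = (\<Sum>b\<in>B. c2 b *\<^sub>R w b)" using xy(2) by (auto simp: D_def)
          have "u *\<^sub>R x + v *\<^sub>R y = (\<Sum>b\<in>B. (u * c1 b + v * c2 b) *\<^sub>R w b)"
            unfolding c1(2) c2(2) by (simp add: scaleR_sum_right sum.distrib[symmetric] scaleR_add_left)
          moreover have "\<forall>b\<in>B. 0 \<le> u * c1 b + v * c2 b" using c1(1) c2(1) uv by simp
          ultimately show "u *\<^sub>R x + v *\<^sub>R y \<in> D" unfolding D_def
            by (intro CollectI exI[of _ "\<lambda>b. u * c1 b + v * c2 b"] conjI)
        qed
        show "conic D" unfolding conic_def
        proof (intro allI impI)
          fix x and t :: real assume "x \<in> D" "0 \<le> t"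
          then obtain c1 where c1: "\<forall>b\<in>B. 0 \<le> c1 b" "x = (\<Sum>b\<in>B. c1 b *\<^sub>R w b)" by (auto simp: D_def)
          have "t *\<^sub>R x = (\<Sum>b\<in>B. (t * c1 b) *\<^sub>R w b)" unfolding c1(2) by (simp add: scaleR_sum_right)
          moreover have "\<forall>b\<in>B. 0 \<le> t * c1 b" using c1(1) \<open>0 \<le> t\<close> by simp
          ultimately show "t *\<^sub>R x \<in> D" unfolding D_def
            by (intro CollectI exI[of _ "\<lambda>b. t * c1 b"] conjI)
        qed
      qed
    qed
  qed
  have "polyhedron C" unfolding C_def using finB by (intro polyhedron_convex_cone_hull) simp
  then have "\<exists>F. finite F \<and> C = \<Inter>F \<and> (\<forall>h\<in>F. \<exists>v \<beta>. v \<noteq> 0 \<and> h = {x. v \<bullet> x \<le> \<beta>})"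
    by (simp only: polyhedron_def)
  then obtain F where F0: "finite F \<and> C = \<Inter>F \<and> (\<forall>h\<in>F. \<exists>v \<beta>. v \<noteq> 0 \<and> h = {x. v \<bullet> x \<le> \<beta>})" ..
  have F: "finite F" "C = \<Inter>F" "\<forall>h\<in>F. \<exists>v \<beta>. v \<noteq> 0 \<and> h = {x. v \<bullet> x \<le> \<beta>}"
    using F0[THEN conjunct1] F0[THEN conjunct2, THEN conjunct1] F0[THEN conjunct2, THEN conjunct2] by -
  have "\<forall>h\<in>F. \<exists>v \<beta>. \<forall>x. (x \<in> h) = (v \<bullet> x \<le> \<beta>)"
  proof
    fix h assume "h \<in> F"
    then obtain v \<beta> where "h = {x. v \<bullet> x \<le> \<beta>}" using F(3) by blast
    then show "\<exists>v \<beta>. \<forall>x. (x \<in> h) = (v \<bullet> x \<le> \<beta>)" by blast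
  qed
  then obtain hv h\<beta> where hvb: "\<And>h x. h \<in> F \<Longrightarrow> (x \<in> h) = (hv h \<bullet> x \<le> h\<beta> h)" by metis
  have C0: "0 \<in> C" unfolding C_def by (rule convex_cone_hull_contains_0)
  have Cconic: "t *\<^sub>R z \<in> C" if "z \<in> C" "t \<ge> 0" for z t
    using that unfolding C_def by (rule convex_cone_hull_mul)
  have Ceq: "C = {z. \<forall>h\<in>F. hv h \<bullet> z \<le> 0}"
  proof
    show "C \<subseteq> {z. \<forall>h\<in>F. hv h \<bullet> z \<le> 0}"
    proof (safe)
      fix z h assume "z \<in> C" "h \<in> F"
      show "hv h \<bullet> z \<le> 0"
      proof (rule ccontr)
        assume "\<not> hv h \<bullet> z \<le> 0"
        hence pos: "hv h \<bullet> z > 0" by simp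
        define t where "t = (\<bar>h\<beta> h\<bar> + 1) / (hv h \<bullet> z)"
        have "t \<ge> 0" using pos by (simp add: t_def)
        hence "t *\<^sub>R z \<in> h" using Cconic[OF \<open>z \<in> C\<close>] F(2) \<open>h \<in> F\<close> by blast
        hence "t * (hv h \<bullet> z) \<le> h\<beta> h" using hvb[OF \<open>h \<in> F\<close>, of "t *\<^sub>R z"] by simp
        moreover have "t * (hv h \<bullet> z) = \<bar>h\<beta> h\<bar> + 1" using pos by (simp add: t_def)
        ultimately show False by linarith
      qed
    qed
    show "{z. \<forall>h\<in>F. hv h \<bullet> z \<le> 0} \<subseteq> C"
    proof
      fix z assume z: "z \<in> {z. \<forall>h\<in>F. hv h \<bullet> z \<le> 0}"
      have "z \<in> h" if "h \<in> F" for h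
      proof -
        have "0 \<in> h" using C0 F(2) that by blast
        hence "0 \<le> h\<beta> h" using hvb[OF that, of 0] by simp
        moreover have "hv h \<bullet> z \<le> 0" using z that by blast
        ultimately show ?thesis using hvb[OF that, of z] by linarith
      qed
      thus "z \<in> C" using F(2) by blast
    qed
  qed
  have CsubA: "C \<subseteq> a"
  proof
    fix z assume "z \<in> C"
    then obtain c where "z = (\<Sum>b\<in>B. c b *\<^sub>R w b)" using CD by (auto simp: D_def)
    thus "z \<in> a" using sub rep_in by (auto simp: w_def intro!: subspace_sum subspace_scale)
  qed
  define Fin where "Fin = (\<lambda>h. rep (lfv (hv h))) ` F"
  have "finite Fin" "Fin \<subseteq> a" using F(1) rep_in by (auto simp: Fin_def)
  have key: "hv h \<bullet> z = f (rep (lfv (hv h)))" if "f \<in> dual_space a" "z = rep f" for f z h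
  proof -
    have "hv h \<bullet> z = lfv (hv h) z" using rep_in that(2) by (simp add: lfv_def)
    also have "\<dots> = rep (lfv (hv h)) \<bullet> z" using rep_eq[OF lfv_dual] rep_in that(2) by simp
    also have "\<dots> = f (rep (lfv (hv h)))" using rep_eq[OF that(1) rep_in] that(2) by (simp add: inner_commute)
    finally show ?thesis .
  qed
  have "cf B = {f \<in> dual_space a. \<forall>\<xi>\<in>Fin. f \<xi> \<le> 0}"
  proof
    show "cf B \<subseteq> {f \<in> dual_space a. \<forall>\<xi>\<in>Fin. f \<xi> \<le> 0}"
    proof
      fix f assume "f \<in> cf B"
      then obtain c where c: "\<forall>b\<in>B. 0 \<le> c b" "f = (\<lambda>\<xi>. if \<xi> \<in> a then (\<Sum>b\<in>B. c b * lam b \<xi>) else 0)"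
        by (auto simp: cf_def)
      have fd: "f \<in> dual_space a"
        unfolding c(2) dual_space_def using sub
        by (auto simp: lam_add lam_scale subspace_add subspace_scale sum.distrib sum_distrib_left algebra_simps)
      define z where "z = (\<Sum>b\<in>B. c b *\<^sub>R w b)"
      have "z \<in> C" unfolding CD D_def z_def using c(1) by (intro CollectI exI[of _ c] conjI) simp_all
      have fz: "f \<xi> = z \<bullet> \<xi>" if "\<xi> \<in> a" for \<xi>
        using that w_eq by (simp add: c(2) z_def inner_sum_left)
      have "f \<xi> \<le> 0" if xiF: "\<xi> \<in> Fin" for \<xi>
      proof -
        obtain h where h: "h \<in> F" "\<xi> = rep (lfv (hv h))" using xiF unfolding Fin_def by blast
        have "f \<xi> = z \<bullet> rep (lfv (hv h))" using fz h(2) rep_in by simp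
        also have "\<dots> = lfv (hv h) z" using rep_eq[OF lfv_dual, of z] CsubA \<open>z \<in> C\<close> by (auto simp: inner_commute)
        also have "\<dots> = hv h \<bullet> z" using CsubA \<open>z \<in> C\<close> by (auto simp: lfv_def)
        also have "\<dots> \<le> 0" using Ceq \<open>z \<in> C\<close> h(1) by blast
        finally show ?thesis .
      qed
      then show "f \<in> {f \<in> dual_space a. \<forall>\<xi>\<in>Fin. f \<xi> \<le> 0}" using fd by blast
    qed
    show "{f \<in> dual_space a. \<forall>\<xi>\<in>Fin. f \<xi> \<le> 0} \<subseteq> cf B"
    proof
      fix f assume f: "f \<in> {f \<in> dual_space a. \<forall>\<xi>\<in>Fin. f \<xi> \<le> 0}"
      hence fd: "f \<in> dual_space a" by simp
      have "rep f \<in> C" unfolding Ceq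
      proof (safe)
        fix h assume "h \<in> F"
        have "hv h \<bullet> rep f = f (rep (lfv (hv h)))" using key[OF fd refl] .
        also have "\<dots> \<le> 0" using f \<open>h \<in> F\<close> by (auto simp: Fin_def)
        finally show "hv h \<bullet> rep f \<le> 0" .
      qed
      then obtain c where c: "\<forall>b\<in>B. 0 \<le> c b" "rep f = (\<Sum>b\<in>B. c b *\<^sub>R w b)" using CD by (auto simp: D_def)
      have "f = (\<lambda>\<xi>. if \<xi> \<in> a then (\<Sum>b\<in>B. c b * lam b \<xi>) else 0)"
      proof
        fix \<xi>
        show "f \<xi> = (if \<xi> \<in> a then (\<Sum>b\<in>B. c b * lam b \<xi>) else 0)"
        proof (cases "\<xi> \<in> a")
          case True
          have "f \<xi> = rep f \<bullet> \<xi>" by (rule rep_eq[OF fd True])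
          also have "\<dots> = (\<Sum>b\<in>B. c b * lam b \<xi>)" unfolding c(2) using w_eq[OF True] by (simp add: inner_sum_left)
          finally show ?thesis using True by simp
        next
          case False then show ?thesis using fd by (simp add: dual_space_def)
        qed
      qed
      then show "f \<in> cf B" unfolding cf_def using c(1) by (intro CollectI exI[of _ c] conjI) simp_all
    qed
  qed
  then show ?thesis unfolding polyhedral_dual_def using \<open>finite Fin\<close> \<open>Fin \<subseteq> a\<close> by blast
qed

end

theorem mainTheorem6:
  fixes a :: "(real^'n^'n) set"
  assumes "subspace a"
    and "\<forall>\<xi>\<in>a. transpose \<xi> = \<xi>"
    and "\<forall>\<xi>\<in>a. \<forall>\<eta>\<in>a. \<xi> ** \<eta> = \<eta> ** \<xi>"
  shows "polyhedral_dual a (range (moment_map a))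
       \<and> open {x. moment_map a ` closure (orbit_A a x) = range (moment_map a)}
       \<and> closure {x. moment_map a ` closure (orbit_A a x) = range (moment_map a)} = UNIV"
proof -
  obtain B where B: "finite B" "pairwise orthogonal B" "\<forall>b\<in>B. norm b = 1" "span B = UNIV"
      "\<forall>b\<in>B. \<forall>\<xi>\<in>a. \<xi> *v b = (b \<bullet> (\<xi> *v b)) *\<^sub>R b"
    using simdiag[OF assms(2,3)] by blast
  interpret W: wsetup a B
    by unfold_locales (use B assms(1) in \<open>simp_all add: lam_def\<close>)
  define U where "U = {x. moment_map a ` closure (orbit_A a x) = range (moment_map a)}"
  have img: "moment_map a ` closure (orbit_A a x) = W.cf {b\<in>B. b \<bullet> x \<noteq> 0}" for x
    using W.orbit_sub_cf[of x] W.cf_sub_orbit[of x] by (rule subset_antisym)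
  have Ueq: "x \<in> U \<longleftrightarrow> W.cf {b\<in>B. b \<bullet> x \<noteq> 0} = W.cf B" for x
  proof -
    have "x \<in> U \<longleftrightarrow> moment_map a ` closure (orbit_A a x) = range (moment_map a)"
      unfolding U_def by (rule mem_Collect_eq)
    also have "\<dots> \<longleftrightarrow> W.cf {b\<in>B. b \<bullet> x \<noteq> 0} = W.cf B" by (simp only: img W.range_mu)
    finally show ?thesis .
  qed
  have P: "polyhedral_dual a (range (moment_map a))"
    unfolding W.range_mu by (rule W.polyhedral)
  have O: "open U"
  proof (subst open_subopen, intro ballI)
    fix x assume "x \<in> U"
    define T where "T = - (\<Union>b\<in>{b\<in>B. b \<bullet> x \<noteq> 0}. {y. b \<bullet> y = 0})"
    have "open T" unfolding T_def
      using B(1) by (intro open_Compl closed_UN) (auto simp: closed_hyperplane)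
    moreover have "x \<in> T" by (auto simp: T_def)
    moreover have "T \<subseteq> U"
    proof
      fix y assume "y \<in> T"
      hence sub: "{b\<in>B. b \<bullet> x \<noteq> 0} \<subseteq> {b\<in>B. b \<bullet> y \<noteq> 0}" by (auto simp: T_def)
      have "W.cf {b\<in>B. b \<bullet> y \<noteq> 0} \<subseteq> W.cf B" by (rule W.cf_mono) auto
      moreover have "W.cf {b\<in>B. b \<bullet> x \<noteq> 0} \<subseteq> W.cf {b\<in>B. b \<bullet> y \<noteq> 0}" by (rule W.cf_mono[OF sub])
      moreover have "W.cf {b\<in>B. b \<bullet> x \<noteq> 0} = W.cf B" using \<open>x \<in> U\<close> Ueq by blast
      ultimately show "y \<in> U" using Ueq by blast
    qed
    ultimately show "\<exists>T. open T \<and> x \<in> T \<and> T \<subseteq> U" by blast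
  qed
  have D: "closure U = UNIV"
  proof (rule set_eqI, rule iffI)
    fix z :: "real^'n"
    show "z \<in> closure U" unfolding closure_approachable
    proof (intro allI impI)
      fix \<epsilon> :: real assume "\<epsilon> > 0"
      define u where "u = (\<Sum>b\<in>B. (1::real) *\<^sub>R b)"
      have bu: "b \<bullet> u = 1" if "b \<in> B" for b using W.coord[OF that, of "\<lambda>_. 1"] by (simp add: u_def)
      define \<delta> where "\<delta> = \<epsilon> / (norm u + 1)"
      have "\<delta> > 0" using \<open>\<epsilon> > 0\<close> by (simp add: \<delta>_def add_nonneg_pos)
      define bad where "bad = (\<lambda>b. - (b \<bullet> z)) ` B"
      have "finite bad" using B(1) by (simp add: bad_def)
      have "\<exists>n. \<delta> / real (Suc n) \<notin> bad"
      proof (rule ccontr)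
        assume "\<not> ?thesis"
        hence "range (\<lambda>n. \<delta> / real (Suc n)) \<subseteq> bad" by auto
        hence "finite (range (\<lambda>n. \<delta> / real (Suc n)))" using \<open>finite bad\<close> finite_subset by blast
        moreover have "inj (\<lambda>n. \<delta> / real (Suc n))" using \<open>\<delta> > 0\<close> by (auto simp: inj_def)
        ultimately have "finite (UNIV :: nat set)" using finite_imageD by blast
        thus False by simp
      qed
      then obtain n where n: "\<delta> / real (Suc n) \<notin> bad" by blast
      define t where "t = \<delta> / real (Suc n)"
      have "t > 0" using \<open>\<delta> > 0\<close> by (simp add: t_def)
      have "t \<le> \<delta>" using \<open>\<delta> > 0\<close> by (simp add: t_def divide_le_eq)
      define x where "x = z + t *\<^sub>R u"
      have "b \<bullet> x \<noteq> 0" if "b \<in> B" for b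
      proof
        assume "b \<bullet> x = 0"
        hence "t = - (b \<bullet> z)" using bu[OF that] by (simp add: x_def inner_add_right)
        thus False using n that by (simp add: t_def bad_def)
      qed
      hence "{b\<in>B. b \<bullet> x \<noteq> 0} = B" by auto
      hence "x \<in> U" using Ueq by simp
      moreover have "dist x z < \<epsilon>"
      proof -
        have "dist x z = t * norm u" using \<open>t > 0\<close> by (simp add: x_def dist_norm)
        also have "\<dots> \<le> \<delta> * norm u" using \<open>t \<le> \<delta>\<close> by (simp add: mult_right_mono)
        also have "\<dots> < \<delta> * (norm u + 1)" using \<open>\<delta> > 0\<close> by simp
        also have "\<dots> = \<epsilon>"
        proof -
          have "norm u + 1 \<noteq> 0" using norm_ge_zero[of u] by linarith
          thus ?thesis by (simp add: \<delta>_def)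
        qed
        finally show ?thesis .
      qed
      ultimately show "\<exists>y\<in>U. dist y z < \<epsilon>" by blast
    qed
  qed simp
  show ?thesis using P O D unfolding U_def by blast
qed


end
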